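(* Let $\mathcal{M}\subseteq\mathcal{M}_1$ and $\mathbb{P}\in\mathcal{M}$. Let $\alpha$ be of the form $\alpha(Q)=\widetilde\alpha(Q)$ for $Q\in\mathcal{Q}^{\mathbb{P}}$, $\alpha(Q)=+\infty$ for $Q\in\mathcal{M}_1\setminus\mathcal{Q}^{\mathbb{P}}$, where $\mathcal{Q}^{\mathbb{P}}$ is a weak-$*$-closed subset of $\mathcal{P}^{\mathbb{P}}$, $\widetilde\alpha<\infty$ on $\mathcal{Q}^{\mathbb{P}}$ and $\inf_{\mathcal{Q}^{\mathbb{P}}}\widetilde\alpha>-\infty$. Then for all $X\in\mathcal{X}^{\mathcal{M}}\cap L^\infty(\mathbb{P})$, $\widehat\rho^{\mathcal{M}}(X)=\widehat\rho^{\mathbb{P}}(X)=\rho^{\mathbb{P}}(X)$.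
   Context: $(\Omega,\mathcal{F})$ is a measurable space, $\mathcal{M}_1$ the set of probability measures on it with the topology of weak (weak-$*$) convergence, $\mathcal{X}$ the space of pointwise bounded $\mathcal{F}$-measurable real functions, $L^\infty(P)=L^\infty(\Omega,\mathcal{F},P)$, $\mathcal{P}^P=\{Q\in\mathcal{M}_1:Q\ll P\}$. With $\alpha$ as in the claim, $\rho(X)=\sup_{Q\in\mathcal{M}_1}\{\mathbb{E}_Q[-X]-\alpha(Q)\}$ on $\mathcal{X}$ (assumed real-valued). For $P\in\mathcal{M}_1$, $X\in L^\infty(P)$: $\rho^P(X)=\inf_{\{\widetilde X\in\mathcal{X}:P(\widetilde X=X)=1\}}\rho(\widetilde X)$ and $\widehat\rho^P(X)=\sup_{Q\in\mathcal{P}^P}\{\mathbb{E}_Q[-X]-\alpha(Q)\}$. $\mathcal{X}^{\mathcal{M}}=\bigcap_{P\in\mathcal{M}}L^\infty(P)$ and $\widehat\rho^{\mathcal{M}}(X)=\sup_{P\in\mathcal{M}}\widehat\rho^P(X)$. *)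

theory Defs
  imports "HOL-Probability.Probability"
begin

text \<open>The measurable space (Omega, F) is represented by a measure Msp; only its
  space and sigma-algebra are used.\<close>

definition M1 :: "'a measure \<Rightarrow> 'a measure set" where
  "M1 Msp = {Q. prob_space Q \<and> sets Q = sets Msp}"

definition Xsp :: "'a measure \<Rightarrow> ('a \<Rightarrow> real) set" where
  "Xsp Msp = {X. X \<in> borel_measurable Msp \<and> (\<exists>C. \<forall>w\<in>space Msp. \<bar>X w\<bar> \<le> C)}"

text \<open>L-infinity(P), as a set of (representative) functions: measurable and P-essentially bounded.\<close>
definition Linf :: "'a measure \<Rightarrow> ('a \<Rightarrow> real) set" where
  "Linf P = {X. X \<in> borel_measurable P \<and> (\<exists>C. AE w in P. \<bar>X w\<bar> \<le> C)}"

definition Pabs :: "'a measure \<Rightarrow> 'a measure \<Rightarrow> 'a measure set" where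
  "Pabs Msp P = {Q \<in> M1 Msp. absolutely_continuous P Q}"

text \<open>Closure in the weak-* topology on M1, i.e. the coarsest topology making all maps
  Q \<mapsto> E_Q[f], f bounded measurable, continuous (basic neighbourhoods).\<close>
definition weak_star_closure :: "'a measure \<Rightarrow> 'a measure set \<Rightarrow> 'a measure set" where
  "weak_star_closure Msp S = {Q \<in> M1 Msp. \<forall>Fs (e::real). finite Fs \<and> Fs \<subseteq> Xsp Msp \<and> e > 0 \<longrightarrow>
      (\<exists>Q'\<in>S. \<forall>f\<in>Fs. \<bar>integral\<^sup>L Q f - integral\<^sup>L Q' f\<bar> < e)}"

definition weak_star_closed :: "'a measure \<Rightarrow> 'a measure set \<Rightarrow> bool" where
  "weak_star_closed Msp S \<longleftrightarrow> S \<subseteq> M1 Msp \<and> weak_star_closure Msp S \<subseteq> S"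

definition rho :: "'a measure \<Rightarrow> ('a measure \<Rightarrow> ereal) \<Rightarrow> ('a \<Rightarrow> real) \<Rightarrow> ereal" where
  "rho Msp \<alpha> X = (SUP Q\<in>M1 Msp. ereal (integral\<^sup>L Q (\<lambda>w. - X w)) - \<alpha> Q)"

definition rhoP :: "'a measure \<Rightarrow> ('a measure \<Rightarrow> ereal) \<Rightarrow> 'a measure \<Rightarrow> ('a \<Rightarrow> real) \<Rightarrow> ereal" where
  "rhoP Msp \<alpha> P X = (INF Y\<in>{Y \<in> Xsp Msp. AE w in P. Y w = X w}. rho Msp \<alpha> Y)"

definition rhohatP :: "'a measure \<Rightarrow> ('a measure \<Rightarrow> ereal) \<Rightarrow> 'a measure \<Rightarrow> ('a \<Rightarrow> real) \<Rightarrow> ereal" where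
  "rhohatP Msp \<alpha> P X = (SUP Q\<in>Pabs Msp P. ereal (integral\<^sup>L Q (\<lambda>w. - X w)) - \<alpha> Q)"

definition XM :: "'a measure set \<Rightarrow> ('a \<Rightarrow> real) set" where
  "XM \<M> = (\<Inter>P\<in>\<M>. Linf P)"

definition rhohatM :: "'a measure \<Rightarrow> ('a measure \<Rightarrow> ereal) \<Rightarrow> 'a measure set \<Rightarrow> ('a \<Rightarrow> real) \<Rightarrow> ereal" where
  "rhohatM Msp \<alpha> \<M> X = (SUP P\<in>\<M>. rhohatP Msp \<alpha> P X)"

end

theory Submission
  imports Defs
begin

lemma SUP_restrict_bot:
  fixes f :: "'b \<Rightarrow> ereal"
  assumes "B \<subseteq> A" "\<forall>x\<in>A - B. f x = -\<infinity>"
  shows "(SUP x\<in>A. f x) = (SUP x\<in>B. f x)"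
proof (rule antisym)
  show "(SUP x\<in>A. f x) \<le> (SUP x\<in>B. f x)"
  proof (rule SUP_least)
    fix x assume "x \<in> A"
    show "f x \<le> (SUP x\<in>B. f x)"
      using assms \<open>x \<in> A\<close> by (cases "x \<in> B") (auto intro: SUP_upper)
  qed
  show "(SUP x\<in>B. f x) \<le> (SUP x\<in>A. f x)"
    using assms(1) by (rule SUP_subset_mono) simp
qed

theorem corollary5p9:
  fixes Msp :: "'a measure" and \<M> :: "'a measure set" and P :: "'a measure"
    and \<alpha> :: "'a measure \<Rightarrow> ereal" and QP :: "'a measure set"
  assumes rho_real: "\<forall>X\<in>Xsp Msp. \<bar>rho Msp \<alpha> X\<bar> \<noteq> \<infinity>"
    and M_sub: "\<M> \<subseteq> M1 Msp" and P_in: "P \<in> \<M>"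
    and QP_sub: "QP \<subseteq> Pabs Msp P" and QP_closed: "weak_star_closed Msp QP"
    and alpha_out: "\<forall>Q\<in>M1 Msp - QP. \<alpha> Q = \<infinity>"
    and alpha_fin: "\<forall>Q\<in>QP. \<alpha> Q < \<infinity>"
    and alpha_inf: "(INF Q\<in>QP. \<alpha> Q) > - \<infinity>"
  shows "\<forall>X \<in> XM \<M> \<inter> Linf P.
           rhohatM Msp \<alpha> \<M> X = rhohatP Msp \<alpha> P X \<and> rhohatP Msp \<alpha> P X = rhoP Msp \<alpha> P X"
proof
  fix X assume X: "X \<in> XM \<M> \<inter> Linf P"
  define S where "S = (\<lambda>Y. SUP Q\<in>QP. ereal (integral\<^sup>L Q (\<lambda>w. - Y w)) - \<alpha> Q)"
  have Pabs_sub: "Pabs Msp P' \<subseteq> M1 Msp" for P' unfolding Pabs_def by auto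
  have out: "\<forall>Q\<in>A - QP. ereal (integral\<^sup>L Q (\<lambda>w. - Y w)) - \<alpha> Q = -\<infinity>"
    if "A \<subseteq> M1 Msp" for A Y using alpha_out that by auto
  have hatS: "rhohatP Msp \<alpha> P Y = S Y" for Y
    unfolding rhohatP_def S_def by (rule SUP_restrict_bot[OF QP_sub out[OF Pabs_sub]])
  have rhoS: "rho Msp \<alpha> Y = S Y" for Y
    unfolding rho_def S_def
    by (rule SUP_restrict_bot[OF _ out]) (use QP_sub Pabs_sub in auto)
  have PM: "P \<in> M1 Msp" using M_sub P_in by auto
  have setsP: "sets P = sets Msp" using PM unfolding M1_def by auto
  have Xm: "X \<in> borel_measurable P" and "\<exists>C. AE w in P. \<bar>X w\<bar> \<le> C"
    using X unfolding Linf_def by auto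
  then obtain C where C: "AE w in P. \<bar>X w\<bar> \<le> C" by auto
  have XmM: "X \<in> borel_measurable Msp" using Xm measurable_cong_sets[OF setsP refl] by auto
  have SY: "S Y = S X" if "Y \<in> Xsp Msp" "AE w in P. Y w = X w" for Y
    unfolding S_def
  proof (rule SUP_cong[OF refl])
    fix Q assume "Q \<in> QP"
    then have Q: "Q \<in> M1 Msp" "absolutely_continuous P Q"
      using QP_sub unfolding Pabs_def by auto
    have sQ: "sets Q = sets Msp" using Q unfolding M1_def by auto
    have "AE w in Q. Y w = X w"
      by (rule absolutely_continuous_AE[OF _ Q(2) that(2)]) (simp add: sQ setsP)
    then have "integral\<^sup>L Q (\<lambda>w. - Y w) = integral\<^sup>L Q (\<lambda>w. - X w)"
      by (intro integral_cong_AE) (use that(1) XmM sQ in \<open>auto simp: Xsp_def measurable_cong_sets[OF sQ refl]\<close>)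
    then show "ereal (integral\<^sup>L Q (\<lambda>w. - Y w)) - \<alpha> Q = ereal (integral\<^sup>L Q (\<lambda>w. - X w)) - \<alpha> Q"
      by simp
  qed
  define Y where "Y = (\<lambda>w. if \<bar>X w\<bar> \<le> C then X w else 0)"
  have Y: "Y \<in> Xsp Msp"
    unfolding Xsp_def Y_def
  proof (intro CollectI conjI exI ballI)
    show "(\<lambda>w. if \<bar>X w\<bar> \<le> C then X w else 0) \<in> borel_measurable Msp"
      using XmM by measurable
    fix w show "\<bar>if \<bar>X w\<bar> \<le> C then X w else 0\<bar> \<le> \<bar>C\<bar>" by auto
  qed
  have YX: "AE w in P. Y w = X w" using C by eventually_elim (auto simp: Y_def)
  have rhoP_eq: "rhoP Msp \<alpha> P X = S X"
    unfolding rhoP_def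
  proof -
    have ne: "{Y \<in> Xsp Msp. AE w in P. Y w = X w} \<noteq> {}" using Y YX by auto
    have "(INF Y\<in>{Y \<in> Xsp Msp. AE w in P. Y w = X w}. rho Msp \<alpha> Y)
        = (INF Y\<in>{Y \<in> Xsp Msp. AE w in P. Y w = X w}. S X)"
      by (rule INF_cong[OF refl]) (simp add: rhoS SY)
    also have "\<dots> = S X" using ne by simp
    finally show "(INF Y\<in>{Y \<in> Xsp Msp. AE w in P. Y w = X w}. rho Msp \<alpha> Y) = S X" .
  qed
  have le: "rhohatP Msp \<alpha> P' X \<le> S X" for P'
  proof -
    have "rhohatP Msp \<alpha> P' X = (SUP Q\<in>Pabs Msp P' \<inter> QP. ereal (integral\<^sup>L Q (\<lambda>w. - X w)) - \<alpha> Q)"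
      unfolding rhohatP_def
      by (rule SUP_restrict_bot) (use out[OF Pabs_sub] in auto)
    also have "\<dots> \<le> S X" unfolding S_def by (rule SUP_subset_mono) auto
    finally show ?thesis .
  qed
  have "rhohatM Msp \<alpha> \<M> X = S X"
    unfolding rhohatM_def
  proof (rule antisym)
    show "(SUP P\<in>\<M>. rhohatP Msp \<alpha> P X) \<le> S X" by (rule SUP_least) (rule le)
    show "S X \<le> (SUP P\<in>\<M>. rhohatP Msp \<alpha> P X)"
      using SUP_upper[OF P_in, of "\<lambda>P. rhohatP Msp \<alpha> P X"] hatS by simp
  qed
  then show "rhohatM Msp \<alpha> \<M> X = rhohatP Msp \<alpha> P X \<and> rhohatP Msp \<alpha> P X = rhoP Msp \<alpha> P X"
    using hatS rhoP_eq by simp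
qed

end
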